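(* For all $n\ge 3$, $|F_n(321,1324)|=\frac{3}{2}n^2-\frac{13}{2}n+10$.
   Context: A permutation $\pi$ avoids a classical pattern $p\in S_k$ if no subsequence of $\pi$ of length $k$ is order-isomorphic to $p$. A Fishburn permutation is a permutation $\pi=\pi_1\cdots\pi_n$ of $[n]$ for which there are no indices $i<j$ with $\pi_j<\pi_i<\pi_{i+1}$ and $\pi_i=\pi_j+1$. $F_n(\sigma_1,\dots,\sigma_k)$ denotes the set of Fishburn permutations of length $n$ avoiding each of the classical patterns $\sigma_1,\dots,\sigma_k$. *)

theory Defs
  imports Complex_Main
begin

definition perms :: "nat \<Rightarrow> nat list set" where
  "perms n = {xs. distinct xs \<and> set xs = {1..n}}"

definition contains :: "nat list \<Rightarrow> nat list \<Rightarrow> bool" where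
  "contains xs p \<longleftrightarrow> (\<exists>f :: nat \<Rightarrow> nat.
      (\<forall>a b. a < b \<and> b < length p \<longrightarrow> f a < f b) \<and>
      (\<forall>a < length p. f a < length xs) \<and>
      (\<forall>a < length p. \<forall>b < length p. (xs ! f a < xs ! f b \<longleftrightarrow> p ! a < p ! b)))"

definition avoids :: "nat list \<Rightarrow> nat list \<Rightarrow> bool" where
  "avoids xs p \<longleftrightarrow> \<not> contains xs p"

definition fishburn :: "nat list \<Rightarrow> bool" where
  "fishburn xs \<longleftrightarrow> \<not> (\<exists>i j. i < j \<and> j < length xs \<and> Suc i < length xs \<and>
      xs ! j < xs ! i \<and> xs ! i < xs ! Suc i \<and> xs ! i = xs ! j + 1)"

definition Fish :: "nat \<Rightarrow> nat list list \<Rightarrow> nat list set" where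
  "Fish n ps = {xs \<in> perms n. fishburn xs \<and> (\<forall>p \<in> set ps. avoids xs p)}"

end

theory Submission
  imports Defs
begin


lemma all_less3: "(\<forall>x<(3::nat). P x) \<longleftrightarrow> P 0 \<and> P 1 \<and> P 2"
proof -
  have "\<And>x::nat. x < 3 \<longleftrightarrow> x = 0 \<or> x = 1 \<or> x = 2" by arith
  then show ?thesis by auto
qed
lemma all_less4: "(\<forall>x<(4::nat). P x) \<longleftrightarrow> P 0 \<and> P 1 \<and> P 2 \<and> P 3"
proof -
  have "\<And>x::nat. x < 4 \<longleftrightarrow> x = 0 \<or> x = 1 \<or> x = 2 \<or> x = 3" by arith
  then show ?thesis by auto
qed

lemma len3: "length [a,b,c] = 3" by simp
lemma len4: "length [a,b,c,d] = 4" by simp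

lemma contains321: "contains xs [3,2,1] \<longleftrightarrow>
  (\<exists>a b c. a < b \<and> b < c \<and> c < length xs \<and> xs!b < xs!a \<and> xs!c < xs!b)"
proof
  assume "contains xs [3,2,1]"
  then obtain f where f1: "\<forall>a b. a < b \<and> b < 3 \<longrightarrow> f a < f b" and f2: "\<forall>a < 3. f a < length xs"
    and f3: "\<forall>a < 3. \<forall>b < 3. (xs ! f a < xs ! f b \<longleftrightarrow> [3,2,1::nat] ! a < [3,2,1] ! b)"
    unfolding contains_def len3 by blast
  have "f 0 < f 1" "f 1 < f 2" "f 2 < length xs" using f1 f2 by auto
  moreover have "xs ! f 1 < xs ! f 0" "xs ! f 2 < xs ! f 1" using f3[rule_format, of 1 0] f3[rule_format, of 2 1] by simp_all
  ultimately show "\<exists>a b c. a < b \<and> b < c \<and> c < length xs \<and> xs!b < xs!a \<and> xs!c < xs!b" by blast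
next
  assume "\<exists>a b c. a < b \<and> b < c \<and> c < length xs \<and> xs!b < xs!a \<and> xs!c < xs!b"
  then obtain a b c where h: "a < b" "b < c" "c < length xs" "xs!b < xs!a" "xs!c < xs!b" by blast
  define f where "f = (\<lambda>i::nat. if i = 0 then a else if i = 1 then b else c)"
  have l3: "\<And>x::nat. x < 3 \<Longrightarrow> x = 0 \<or> x = 1 \<or> x = 2" by arith
  have "(\<forall>x y. x < y \<and> y < 3 \<longrightarrow> f x < f y)"
  proof (intro allI impI)
    fix x y :: nat assume a: "x < y \<and> y < 3"
    then have "x < 3" by simp
    from l3[OF this] l3[of y] a h show "f x < f y" by (auto simp: f_def)
  qed
  moreover have "\<forall>x<3. f x < length xs" using h by (auto simp: f_def all_less3)
  moreover have "\<forall>x<3. \<forall>y<3. (xs ! f x < xs ! f y \<longleftrightarrow> [3,2,1::nat] ! x < [3,2,1] ! y)"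
    unfolding all_less3 using h by (simp add: f_def)
  ultimately show "contains xs [3,2,1]" unfolding contains_def by (intro exI[of _ f]) simp
qed

lemma contains1324: "contains xs [1,3,2,4] \<longleftrightarrow>
  (\<exists>a b c d. a < b \<and> b < c \<and> c < d \<and> d < length xs \<and> xs!a < xs!c \<and> xs!c < xs!b \<and> xs!b < xs!d)"
proof
  assume "contains xs [1,3,2,4]"
  then obtain f where f1: "\<forall>a b. a < b \<and> b < 4 \<longrightarrow> f a < f b" and f2: "\<forall>a < 4. f a < length xs"
    and f3: "\<forall>a < 4. \<forall>b < 4. (xs ! f a < xs ! f b \<longleftrightarrow> [1,3,2,4::nat] ! a < [1,3,2,4] ! b)"
    unfolding contains_def len4 by blast
  have "f 0 < f 1" "f 1 < f 2" "f 2 < f 3" "f 3 < length xs" using f1 f2 by auto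
  moreover have "xs ! f 0 < xs ! f 2" "xs ! f 2 < xs ! f 1" "xs ! f 1 < xs ! f 3" using f3[rule_format, of 0 2] f3[rule_format, of 2 1] f3[rule_format, of 1 3] by simp_all
  ultimately show "\<exists>a b c d. a < b \<and> b < c \<and> c < d \<and> d < length xs \<and> xs!a < xs!c \<and> xs!c < xs!b \<and> xs!b < xs!d" by blast
next
  assume "\<exists>a b c d. a < b \<and> b < c \<and> c < d \<and> d < length xs \<and> xs!a < xs!c \<and> xs!c < xs!b \<and> xs!b < xs!d"
  then obtain a b c d where h: "a < b" "b < c" "c < d" "d < length xs" "xs!a < xs!c" "xs!c < xs!b" "xs!b < xs!d" by blast
  define f where "f = (\<lambda>i::nat. if i = 0 then a else if i = 1 then b else if i = 2 then c else d)"
  have l4: "\<And>x::nat. x < 4 \<Longrightarrow> x = 0 \<or> x = 1 \<or> x = 2 \<or> x = 3" by arith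
  have "(\<forall>x y. x < y \<and> y < 4 \<longrightarrow> f x < f y)"
  proof (intro allI impI)
    fix x y :: nat assume a: "x < y \<and> y < 4"
    then have "x < 4" by simp
    from l4[OF this] l4[of y] a h show "f x < f y" by (auto simp: f_def)
  qed
  moreover have "\<forall>x<4. f x < length xs" using h by (auto simp: f_def all_less4)
  moreover have "\<forall>x<4. \<forall>y<4. (xs ! f x < xs ! f y \<longleftrightarrow> [1,3,2,4::nat] ! x < [1,3,2,4] ! y)"
    unfolding all_less4 using h by (simp add: f_def)
  ultimately show "contains xs [1,3,2,4]" unfolding contains_def by (intro exI[of _ f]) simp
qed

definition bA :: "nat \<Rightarrow> nat \<Rightarrow> nat" where
 "bA m c = (if c = 0 then m else if c < m then c else c+1)"
definition gA :: "nat \<Rightarrow> nat \<Rightarrow> nat \<Rightarrow> nat \<Rightarrow> nat" where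
 "gA m k n i = (if i < k then bA m i else if i = k then n else bA m (i-1))"
definition gB :: "nat \<Rightarrow> nat \<Rightarrow> nat \<Rightarrow> nat \<Rightarrow> nat" where
 "gB m j n i = (if i = 0 then m else if i \<le> j then i else if i \<le> j + (n-m) then i + m - j else i + m - n)"
definition PA :: "nat \<Rightarrow> (nat \<times> nat) set" where
 "PA n = {(m,k). (m = 1 \<and> k < n) \<or> (2 \<le> m \<and> m < n \<and> 2 \<le> k \<and> k < n)}"
definition PB :: "nat \<Rightarrow> (nat \<times> nat) set" where
 "PB n = {(m,j). 3 \<le> m \<and> m+2 \<le> n \<and> 1 \<le> j \<and> j+2 \<le> m}"

lemma perm_map: assumes "\<forall>i<n. 1 \<le> g i \<and> g i \<le> n" "\<forall>i<n. \<forall>j<n. g i = g j \<longrightarrow> i = j"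
  shows "map g [0..<n] \<in> perms n"
proof -
  have inj: "inj_on g {0..<n}" using assms(2) by (auto simp: inj_on_def)
  have sub: "g ` {0..<n} \<subseteq> {1..n}" using assms(1) by auto
  have "card (g ` {0..<n}) = n" using card_image[OF inj] by simp
  then have "g ` {0..<n} = {1..n}" using sub by (intro card_subset_eq) auto
  then show ?thesis using inj by (simp add: perms_def distinct_map)
qed

lemma fish_map: "fishburn (map g [0..<n]) \<longleftrightarrow> \<not>(\<exists>i j. i<j \<and> j<n \<and> Suc i<n \<and> g j < g i \<and> g i < g (Suc i) \<and> g i = g j + 1)"
proof -
  have e: "\<And>i. i<n \<Longrightarrow> map g [0..<n] ! i = g i" by simp
  show ?thesis unfolding fishburn_def length_map length_upt diff_zero
    apply (rule iffI; intro notI; elim exE conjE notE)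
    subgoal for i j apply (rule exI[of _ i], rule exI[of _ j]) using e[of i] e[of j] e[of "Suc i"] by simp
    subgoal for i j apply (rule exI[of _ i], rule exI[of _ j]) using e[of i] e[of j] e[of "Suc i"] by simp
    done
qed

lemma c321_map: "contains (map g [0..<n]) [3,2,1] \<longleftrightarrow> (\<exists>a b c. a < b \<and> b < c \<and> c < n \<and> g b < g a \<and> g c < g b)"
proof -
  have e: "\<And>i. i<n \<Longrightarrow> map g [0..<n] ! i = g i" by simp
  show ?thesis unfolding contains321 length_map length_upt diff_zero
    apply (rule iffI; elim exE conjE)
    subgoal for a b c apply (rule exI[of _ a], rule exI[of _ b], rule exI[of _ c]) using e[of a] e[of b] e[of c] by simp
    subgoal for a b c apply (rule exI[of _ a], rule exI[of _ b], rule exI[of _ c]) using e[of a] e[of b] e[of c] by simp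
    done
qed

lemma c1324_map: "contains (map g [0..<n]) [1,3,2,4] \<longleftrightarrow> (\<exists>a b c d. a < b \<and> b < c \<and> c < d \<and> d < n \<and> g a < g c \<and> g c < g b \<and> g b < g d)"
proof -
  have e: "\<And>i. i<n \<Longrightarrow> map g [0..<n] ! i = g i" by simp
  show ?thesis unfolding contains1324 length_map length_upt diff_zero
    apply (rule iffI; elim exE conjE)
    subgoal for a b c d apply (rule exI[of _ a], rule exI[of _ b], rule exI[of _ c], rule exI[of _ d]) using e[of a] e[of b] e[of c] e[of d] by simp
    subgoal for a b c d apply (rule exI[of _ a], rule exI[of _ b], rule exI[of _ c], rule exI[of _ d]) using e[of a] e[of b] e[of c] e[of d] by simp
    done
qed

lemma invA: assumes "(m,k) \<in> PA n" "i < j" "j < n"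
  "gA m k n j < gA m k n i" shows "i = 0 \<or> gA m k n i = n"
  using assms unfolding gA_def bA_def PA_def by (auto split: if_splits)

lemma A_valid: assumes "(m,k) \<in> PA n" shows "map (gA m k n) [0..<n] \<in> Fish n [[3,2,1],[1,3,2,4]]"
proof -
  have p: "map (gA m k n) [0..<n] \<in> perms n"
    apply (rule perm_map)
    using assms unfolding gA_def bA_def PA_def by (auto split: if_splits)
  have le: "\<And>i. i < n \<Longrightarrow> gA m k n i \<le> n"
    using assms unfolding gA_def bA_def PA_def by (auto split: if_splits)
  have f: "fishburn (map (gA m k n) [0..<n])"
    unfolding fish_map
  proof (intro notI, elim exE conjE)
    fix i j assume h: "i < j" "j < n" "Suc i < n" "gA m k n j < gA m k n i" "gA m k n i < gA m k n (Suc i)" "gA m k n i = gA m k n j + 1"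
    from invA[OF assms h(1,2,4)] have "i = 0 \<or> gA m k n i = n" .
    then show False
    proof
      assume "gA m k n i = n" then show False using h le[of "Suc i"] by simp
    next
      assume "i = 0" then show False using h assms unfolding gA_def bA_def PA_def by (auto split: if_splits)
    qed
  qed
  have a1: "\<not> contains (map (gA m k n) [0..<n]) [3,2,1]"
    unfolding c321_map
  proof (intro notI, elim exE conjE)
    fix a b c assume h: "a < b" "b < c" "c < n" "gA m k n b < gA m k n a" "gA m k n c < gA m k n b"
    from invA[OF assms h(2,3,5)] h(1) have "gA m k n b = n" by auto
    then show False using h le[of a] by simp
  qed
  have a2: "\<not> contains (map (gA m k n) [0..<n]) [1,3,2,4]"
    unfolding c1324_map
  proof (intro notI, elim exE conjE)
    fix a b c d assume h: "a < b" "b < c" "c < d" "d < n" "gA m k n a < gA m k n c" "gA m k n c < gA m k n b" "gA m k n b < gA m k n d"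
    from invA[OF assms h(2) _ h(6)] h(1,3,4) have "gA m k n b = n" by auto
    then show False using h le[of d] by simp
  qed
  show ?thesis using p f a1 a2 by (simp add: Fish_def avoids_def)
qed
lemma invB: assumes "(m,j) \<in> PB n" "i < i'" "i' < n"
  "gB m j n i' < gB m j n i" shows "(i=0 \<and> \<not> (j < i' \<and> i' \<le> j + (n-m))) \<or> (j < i \<and> i \<le> j+(n-m) \<and> j+(n-m) < i')"
  using assms unfolding gB_def PB_def by (auto split: if_splits)

lemma B_valid: assumes "(m,j) \<in> PB n" shows "map (gB m j n) [0..<n] \<in> Fish n [[3,2,1],[1,3,2,4]]"
proof -
  have p: "map (gB m j n) [0..<n] \<in> perms n"
    apply (rule perm_map)
    using assms unfolding gB_def PB_def by (auto split: if_splits)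
  have f: "fishburn (map (gB m j n) [0..<n])"
    unfolding fish_map
  proof (intro notI, elim exE conjE)
    fix i i' assume h: "i < i'" "i' < n" "Suc i < n" "gB m j n i' < gB m j n i" "gB m j n i < gB m j n (Suc i)" "gB m j n i = gB m j n i' + 1"
    from invB[OF assms h(1,2,4)] show False
      using h assms unfolding gB_def PB_def by (auto split: if_splits)
  qed
  have a1: "\<not> contains (map (gB m j n) [0..<n]) [3,2,1]"
    unfolding c321_map
  proof (intro notI, elim exE conjE)
    fix a b c assume h: "a < b" "b < c" "c < n" "gB m j n b < gB m j n a" "gB m j n c < gB m j n b"
    from invB[OF assms h(2,3,5)] invB[OF assms h(1) _ h(4)] h show False by auto
  qed
  have a2: "\<not> contains (map (gB m j n) [0..<n]) [1,3,2,4]"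
    unfolding c1324_map
  proof (intro notI, elim exE conjE)
    fix a b c d assume h: "a < b" "b < c" "c < d" "d < n" "gB m j n a < gB m j n c" "gB m j n c < gB m j n b" "gB m j n b < gB m j n d"
    from invB[OF assms h(2) _ h(6)] h(1,3,4) have "j < b \<and> b \<le> j+(n-m) \<and> j+(n-m) < d" by auto
    then show False using h assms unfolding gB_def PB_def by (auto split: if_splits)
  qed
  show ?thesis using p f a1 a2 by (simp add: Fish_def avoids_def)
qed


definition FA :: "nat \<Rightarrow> nat list set" where
  "FA n = (\<lambda>(m,k). map (gA m k n) [0..<n]) ` PA n"
definition FB :: "nat \<Rightarrow> nat list set" where
  "FB n = (\<lambda>(m,j). map (gB m j n) [0..<n]) ` PB n"

lemma FA_I: "(m,k) \<in> PA n \<Longrightarrow> xs = map (gA m k n) [0..<n] \<Longrightarrow> xs \<in> FA n"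
  unfolding FA_def by (rule image_eqI[of _ _ "(m,k)"]) auto
lemma FB_I: "(m,j) \<in> PB n \<Longrightarrow> xs = map (gB m j n) [0..<n] \<Longrightarrow> xs \<in> FB n"
  unfolding FB_def by (rule image_eqI[of _ _ "(m,j)"]) auto

locale VP = fixes xs :: "nat list" and n :: nat
  assumes n3: "n \<ge> 3" and inF: "xs \<in> Fish n [[3,2,1],[1,3,2,4]]"
begin

lemma dist: "distinct xs" and setx: "set xs = {1..n}"
  using inF by (auto simp: Fish_def perms_def)

lemma len: "length xs = n"
  using distinct_card[OF dist] setx by simp

lemma rng: "i < n \<Longrightarrow> 1 \<le> xs!i \<and> xs!i \<le> n"
  using nth_mem[of i xs] setx len by auto

lemma inj: "i < n \<Longrightarrow> j < n \<Longrightarrow> xs!i = xs!j \<Longrightarrow> i = j"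
  using nth_eq_iff_index_eq[OF dist] len by auto

lemma surj: "1 \<le> v \<Longrightarrow> v \<le> n \<Longrightarrow> \<exists>i<n. xs!i = v"
  using setx len by (metis atLeastAtMost_iff in_set_conv_nth)

lemma no321: assumes "a < b" "b < c" "c < n" "xs!b < xs!a" "xs!c < xs!b" shows False
proof -
  have "\<not> contains xs [3,2,1]" using inF by (auto simp: Fish_def avoids_def)
  then show False unfolding contains321 using len assms by blast
qed

lemma no1324: assumes "a < b" "b < c" "c < d" "d < n" "xs!a < xs!c" "xs!c < xs!b" "xs!b < xs!d" shows False
proof -
  have "\<not> contains xs [1,3,2,4]" using inF by (auto simp: Fish_def avoids_def)
  then show False unfolding contains1324 using len assms by blast
qed

lemma nofish: assumes "i < j" "j < n" "Suc i < n" "xs!j < xs!i" "xs!i < xs!(Suc i)" "xs!i = xs!j + 1" shows False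
proof -
  have "fishburn xs" using inF unfolding Fish_def by blast
  then show False unfolding fishburn_def using len assms by blast
qed

lemma rank: assumes "i < n" shows "xs!i = card {j. j < n \<and> xs!j < xs!i} + 1"
proof -
  let ?S = "{j. j < n \<and> xs!j < xs!i}"
  have "inj_on (\<lambda>j. xs!j) ?S" using inj by (auto simp: inj_on_def)
  moreover have "(\<lambda>j. xs!j) ` ?S = {1..<xs!i}"
  proof
    show "(\<lambda>j. xs!j) ` ?S \<subseteq> {1..<xs!i}" using rng by auto
    show "{1..<xs!i} \<subseteq> (\<lambda>j. xs!j) ` ?S"
    proof
      fix v assume "v \<in> {1..<xs!i}"
      then have "1 \<le> v" "v \<le> n" "v < xs!i" using rng[OF assms] by auto
      then obtain j where "j < n" "xs!j = v" using surj by blast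
      then show "v \<in> (\<lambda>j. xs!j) ` ?S" using \<open>v < xs!i\<close> by force
    qed
  qed
  ultimately have "card ?S = xs!i - 1" by (metis card_atLeastLessThan card_image)
  then show ?thesis using rng[OF assms] by simp
qed

lemma rank_card: assumes "i < n" "S \<subseteq> {..<n}" "\<And>j. j < n \<Longrightarrow> xs!j < xs!i \<longleftrightarrow> j \<in> S"
  shows "xs!i = card S + 1"
proof -
  have "{j. j < n \<and> xs!j < xs!i} = S" using assms(2,3) by auto
  then show ?thesis using rank[OF assms(1)] by simp
qed

lemma eq_map: assumes "\<And>i. i < n \<Longrightarrow> xs!i = g i" shows "xs = map g [0..<n]"
  using assms len by (intro nth_equalityI) auto

lemma p1: assumes "xs!0 \<noteq> 1" shows "xs!1 = 1"
proof -
  have m1: "xs!0 \<ge> 2" using rng[of 0] n3 assms by auto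
  have "1 \<le> xs!0 - 1" "xs!0 - 1 \<le> n" using m1 rng[of 0] n3 by auto
  then obtain t where t: "t<n" "xs!t = xs!0 - 1" using surj by blast
  have t0: "0 < t" using t m1 by (cases t) auto
  have t1: "xs!t < xs!0" "xs!0 = xs!t + 1" using t m1 by auto
  have "\<not> (xs!0 < xs!1)"
  proof
    assume "xs!0 < xs!1"
    then show False using nofish[OF t0 t(1) _ t1(1) _ t1(2)] n3 by simp
  qed
  moreover have "xs!1 \<noteq> xs!0" using inj[of 1 0] n3 by auto
  ultimately have lt: "xs!1 < xs!0" by simp
  show "xs!1 = 1"
  proof (rule ccontr)
    assume a: "xs!1 \<noteq> 1"
    obtain s where s: "s<n" "xs!s = 1" using surj[of 1] n3 by auto
    have "s \<noteq> 0" proof assume "s = 0" then show False using assms s by simp qed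
    moreover have "s \<noteq> 1" proof assume "s = 1" then show False using a s by simp qed
    ultimately have "1 < s" by simp
    moreover have "xs!s < xs!1" using a s rng[of 1] n3 by auto
    ultimately show False using no321[of 0 1 s] lt s by auto
  qed
qed

lemma T213: assumes "xs!r = 1" "r<a" "a<b" "b<c" "c<n" "xs!b < xs!a" "xs!a < xs!c" shows False
proof -
  have "xs!b \<noteq> 1" using inj[of b r] assms by auto
  then have "xs!r < xs!b" using rng[of b] assms by auto
  then show False using no1324[of r a b c] assms by auto
qed

lemma small_inc: assumes "0<a" "a<b" "b<n" "xs!a < xs!0" "xs!b < xs!0" shows "xs!a < xs!b"
proof (rule ccontr)
  assume "\<not> xs!a < xs!b"
  moreover have "xs!a \<noteq> xs!b" using inj[of a b] assms by auto
  ultimately have "xs!b < xs!a" by simp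
  then show False using no321[of 0 a b] assms by auto
qed

lemma noinv: assumes R: "r = (if xs!0 = 1 then 0 else 1)"
  and NI: "\<forall>a b. r<a \<and> a<b \<and> b<n \<longrightarrow> xs!a < xs!b"
  shows "xs \<in> FA n"
proof -
  define m where "m = xs!0"
  have chain: "xs!j < xs!i" if "1 \<le> j" "j < i" "i < n" for i j
  proof (cases "r < j")
    case True then show ?thesis using NI that by auto
  next
    case False
    then have "r = 1" "j = 1" "xs!0 \<noteq> 1" using R that by (auto split: if_splits)
    then have "xs!j = 1" using p1 by simp
    moreover have "xs!i \<noteq> 1" using inj[of i j] that \<open>xs!j = 1\<close> by auto
    ultimately show ?thesis using rng[of i] that by auto
  qed
  have val: "xs!i = (if i < m then i else i+1)" if "1 \<le> i" "i < n" for i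
  proof -
    let ?S = "if m < xs!i then {0..<i} else {1..<i}"
    have "xs!i = card ?S + 1"
    proof (rule rank_card)
      show "i < n" by fact
      show "?S \<subseteq> {..<n}" using that by auto
      fix j assume "j < n"
      show "xs!j < xs!i \<longleftrightarrow> j \<in> ?S"
      proof (cases "j = 0")
        case True then show ?thesis using that m_def by auto
      next
        case False
        show ?thesis
        proof (cases "j < i")
          case True then show ?thesis using chain[of j i] False that by auto
        next
          case False2: False
          then have "xs!i \<le> xs!j" using chain[of i j] that \<open>j<n\<close> by (cases "j = i") auto
          then show ?thesis using False2 by auto
        qed
      qed
    qed
    moreover have "xs!i \<noteq> m" using inj[of i 0] that m_def by auto
    ultimately show ?thesis using that by (auto split: if_splits)
  qed
  have mn: "1 \<le> m" "m \<le> n" using rng[of 0] n3 m_def by auto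
  show ?thesis
  proof (cases "m = n")
    case True
    show ?thesis
    proof (rule FA_I[of 1 0])
      show "(1,0) \<in> PA n" using n3 by (auto simp: PA_def)
      show "xs = map (gA 1 0 n) [0..<n]"
      proof (rule eq_map)
        fix i assume "i < n"
        show "xs!i = gA 1 0 n i"
        proof (cases "i = 0")
          case True then show ?thesis using \<open>m = n\<close> m_def by (simp add: gA_def)
        next
          case False
          then have "xs!i = i" using val[of i] \<open>i<n\<close> \<open>m = n\<close> by simp
          then show ?thesis using False by (simp add: gA_def bA_def)
        qed
      qed
    qed
  next
    case False
    show ?thesis
    proof (rule FA_I[of m "n-1"])
      show "(m,n-1) \<in> PA n" using n3 mn False by (auto simp: PA_def)
      show "xs = map (gA m (n-1) n) [0..<n]"
      proof (rule eq_map)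
        fix i assume "i < n"
        show "xs!i = gA m (n-1) n i"
        proof (cases "i = 0")
          case True then show ?thesis using m_def n3 by (simp add: gA_def bA_def)
        next
          case False
          then have "xs!i = (if i < m then i else i+1)" using val[of i] \<open>i<n\<close> by simp
          then show ?thesis using False \<open>i<n\<close> mn \<open>m \<noteq> n\<close> unfolding gA_def bA_def by (auto split: if_splits)
        qed
      qed
    qed
  qed
qed

lemma caseA: assumes R: "r = (if xs!0 = 1 then 0 else 1)"
  and a0: "r < a0" "a0 < b" "b < n" "xs!b < xs!a0"
  and Fpre: "\<And>i j. r<i \<Longrightarrow> i<a0 \<Longrightarrow> i<j \<Longrightarrow> j<n \<Longrightarrow> xs!i < xs!j"
  and notB: "\<not>(xs!a0 = xs!0 + 1 \<and> xs!0 \<ge> 2)"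
  shows "xs \<in> FA n"
proof -
  define m where "m = xs!0"
  define v where "v = xs!a0"
  have pr: "xs!r = 1" using R p1 by (cases "xs!0 = 1") auto
  have rle: "r \<le> 1" using R by auto
  have r0: "r = 0 \<longleftrightarrow> m = 1" using R m_def by auto
  have a0n: "a0 < n" using a0 by simp
  have v2: "v \<ge> 2" "v \<le> n" using rng[of b] rng[of a0] a0 v_def by auto
  have "1 \<le> v - 1" "v - 1 \<le> n" using v2 by auto
  then obtain t where t: "t < n" "xs!t = v - 1" using surj by blast
  have at: "a0 < t"
  proof (rule ccontr)
    assume "\<not> a0 < t"
    then have "t \<le> a0" by simp
    have "t \<noteq> a0" using t v2 v_def by auto
    show False
    proof (cases "t = 0")
      case True
      then have "v = m + 1" using t m_def v2 by simp
      then have "m = 1" using notB m_def v_def rng[of 0] a0 by auto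
      then have "xs!b = xs!0" using \<open>v = m+1\<close> a0 v_def rng[of b] m_def by auto
      then show False using inj[of b 0] a0 by auto
    next
      case False
      show False
      proof (cases "t \<le> r")
        case True
        then have "t = r" using False rle by auto
        then have "v = 2" using t pr by simp
        then have "xs!b = xs!r" using a0 v_def rng[of b] pr by auto
        then show False using inj[of b r] a0 by auto
      next
        case False
        then have "xs!t < xs!b" using Fpre[of t b] \<open>t \<le> a0\<close> \<open>t \<noteq> a0\<close> a0 by auto
        then show False using t a0 v_def by auto
      qed
    qed
  qed
  have sa: "Suc a0 < n" using a0 by simp
  have ps: "xs!(Suc a0) < v"
  proof (rule ccontr)
    assume "\<not> xs!(Suc a0) < v"
    moreover have "xs!(Suc a0) \<noteq> v" using inj[of "Suc a0" a0] sa v_def by auto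
    ultimately have "v < xs!(Suc a0)" by simp
    moreover have "xs!t < xs!a0" "xs!a0 = xs!t + 1" using t v_def v2 by auto
    ultimately show False using nofish[OF at t(1) sa] v_def by simp
  qed
  have vn: "v = n"
  proof (rule ccontr)
    assume "v \<noteq> n"
    then have vlt: "v < n" using v2 by simp
    obtain c where c: "c < n" "xs!c = n" using surj[of n] n3 by auto
    show False
    proof (cases "c = 0")
      case True
      then show False using no321[of 0 a0 "Suc a0"] a0 sa ps vlt c v_def by auto
    next
      case c0: False
      show False
      proof (cases "c \<le> r")
        case True
        then have "c = r" using c0 rle by auto
        then show False using pr c n3 by simp
      next
        case False
        show False
        proof (cases "c < a0")
          case True
          then show False using Fpre[of c "Suc a0"] False sa c rng[of "Suc a0"] by auto
        next
          case False2: False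
          show False
          proof (cases "c \<le> Suc a0")
            case True
            then have "c = a0 \<or> c = Suc a0" using False2 by auto
            then show False using c vlt ps v_def by auto
          next
            case False
            then show False using T213[OF pr a0(1), of "Suc a0" c] ps c v_def vlt by auto
          qed
        qed
      qed
    qed
  qed
  have Fsuf: "xs!a < xs!b'" if "a0 < a" "a < b'" "b' < n" for a b'
  proof (rule ccontr)
    assume "\<not> xs!a < xs!b'"
    moreover have "xs!a \<noteq> xs!b'" using inj[of a b'] that by auto
    ultimately have "xs!b' < xs!a" by simp
    moreover have "xs!a < xs!a0"
    proof -
      have "xs!a \<noteq> n" using inj[of a a0] that vn v_def a0n by auto
      then show ?thesis using rng[of a] that vn v_def by auto
    qed
    ultimately show False using no321[of a0 a b'] that by auto
  qed
  have mn: "m \<noteq> n" "1 \<le> m" "m \<le> n" using inj[of 0 a0] a0 vn v_def m_def rng[of 0] by auto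
  have chain: "xs!j < xs!i" if "1 \<le> j" "j < i" "i < n" "j \<noteq> a0" "i \<noteq> a0" for i j
  proof (cases "r < j")
    case True
    show ?thesis
    proof (cases "j < a0")
      case True then show ?thesis using Fpre[of j i] \<open>r<j\<close> that by auto
    next
      case False then show ?thesis using Fsuf[of j i] that by auto
    qed
  next
    case False
    then have "j = r" using rle that by auto
    then have "xs!j = 1" using pr by simp
    moreover have "xs!i \<noteq> 1" using inj[of i j] that \<open>xs!j = 1\<close> by auto
    ultimately show ?thesis using rng[of i] that by auto
  qed
  have val: "xs!i = bA m (if i < a0 then i else i - 1)" if "i < n" "i \<noteq> 0" "i \<noteq> a0" for i
  proof -
    let ?S = "(if m < xs!i then {0..<i} else {1..<i}) - {a0}"
    have "xs!i = card ?S + 1"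
    proof (rule rank_card)
      show "i < n" by fact
      show "?S \<subseteq> {..<n}" using that by auto
      fix j assume "j < n"
      show "xs!j < xs!i \<longleftrightarrow> j \<in> ?S"
      proof (cases "j = 0")
        case True then show ?thesis using that m_def a0 by auto
      next
        case j0: False
        show ?thesis
        proof (cases "j = a0")
          case True
          have "xs!i \<noteq> n" using inj[of i a0] that vn v_def a0n by auto
          then have "xs!i < xs!j" using rng[of i] that True vn v_def by auto
          then show ?thesis using True by auto
        next
          case ja: False
          show ?thesis
          proof (cases "j < i")
            case True then show ?thesis using chain[of j i] j0 ja that by auto
          next
            case False2: False
            then have "xs!i \<le> xs!j" using chain[of i j] that \<open>j<n\<close> ja by (cases "j = i") auto
            then show ?thesis using False2 by auto
          qed
        qed
      qed
    qed
    moreover have "card ?S = (if m < xs!i then i else i - 1) - (if a0 < i then 1 else 0)"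
      using a0 by (auto simp: card_Diff_singleton_if)
    moreover have "xs!i \<noteq> m" using inj[of i 0] that m_def by auto
    ultimately show ?thesis using that a0(1) unfolding bA_def by (auto split: if_splits)
  qed
  show ?thesis
  proof (rule FA_I[of m a0])
    show "(m,a0) \<in> PA n" using mn a0n a0(1) r0 R m_def by (auto simp: PA_def split: if_splits)
    show "xs = map (gA m a0 n) [0..<n]"
    proof (rule eq_map)
      fix i assume "i < n"
      show "xs!i = gA m a0 n i"
      proof (cases "i = 0")
        case True then show ?thesis using m_def a0 by (simp add: gA_def bA_def)
      next
        case False
        show ?thesis
        proof (cases "i = a0")
          case True then show ?thesis using vn v_def by (simp add: gA_def)
        next
          case False2: False
          then show ?thesis using val[OF \<open>i<n\<close> False False2] by (auto simp: gA_def)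
        qed
      qed
    qed
  qed
qed

lemma caseB: assumes R: "r = (if xs!0 = 1 then 0 else 1)"
  and a0: "r < a0" "a0 < b" "b < n" "xs!b < xs!a0"
  and Fpre: "\<And>i j. r<i \<Longrightarrow> i<a0 \<Longrightarrow> i<j \<Longrightarrow> j<n \<Longrightarrow> xs!i < xs!j"
  and isB: "xs!a0 = xs!0 + 1" "xs!0 \<ge> 2"
  shows "xs \<in> FA n \<union> FB n"
proof -
  define m where "m = xs!0"
  have r1: "r = 1" using R isB by auto
  have p1': "xs!1 = 1" using p1 isB by auto
  have a02: "a0 \<ge> 2" using a0 r1 by simp
  have a0n: "a0 < n" using a0 by simp
  have pa0: "xs!a0 = m+1" using isB m_def by simp
  define P where "P = (\<lambda>b. a0<b \<and> b<n \<and> xs!b < m+1)"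
  have "P b" using a0 pa0 P_def by auto
  define b0 where "b0 = (LEAST b. P b)"
  have Pb0: "P b0" using LeastI[of P b] \<open>P b\<close> b0_def by simp
  have hb0: "a0 < b0" "b0 < n" "xs!b0 < m+1" using Pb0 P_def by auto
  have b0m: "xs!b0 < m" using hb0 inj[of b0 0] m_def a0 by (cases "xs!b0 = m") auto
  have midL: "xs!c > m+1" if "a0 < c" "c < b0" for c
  proof -
    have "\<not> P c" using not_less_Least[of c P] that b0_def by simp
    then have "xs!c \<ge> m+1" using that hb0 P_def by auto
    moreover have "xs!c \<noteq> m+1" using inj[of c a0] that hb0 pa0 by auto
    ultimately show ?thesis by simp
  qed
  have afterQ: "xs!b0 < xs!c \<and> xs!c < m" if "b0 < c" "c < n" for c
  proof
    have "\<not> xs!c < xs!b0" using no321[of a0 b0 c] that hb0 pa0 by auto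
    moreover have "xs!c \<noteq> xs!b0" using inj[of c b0] that hb0 by auto
    ultimately show "xs!b0 < xs!c" by simp
    have pr: "xs!r = 1" using r1 p1' by simp
    have "\<not> m+1 < xs!c" using T213[OF pr a0(1) hb0(1) that] hb0 pa0 by auto
    moreover have "xs!c \<noteq> m+1" using inj[of c a0] that hb0 pa0 by auto
    moreover have "xs!c \<noteq> m" using inj[of c 0] that hb0 m_def by auto
    ultimately show "xs!c < m" by simp
  qed
  have LL: "xs!c \<ge> m+1" if "a0 \<le> c" "c < b0" for c
    using midL[of c] that pa0 by (cases "c = a0") auto
  have QQ: "xs!c < m" if "b0 \<le> c" "c < n" for c
    using afterQ[of c] that b0m by (cases "c = b0") auto
  have Lincr: "xs!a < xs!b'" if "a0 \<le> a" "a < b'" "b' < b0" for a b'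
  proof (rule ccontr)
    assume "\<not> xs!a < xs!b'"
    moreover have "xs!a \<noteq> xs!b'" using inj[of a b'] that hb0 by auto
    ultimately have "xs!b' < xs!a" by simp
    moreover have "xs!b0 < xs!b'" using LL[of b'] that b0m by auto
    ultimately show False using no321[of a b' b0] that hb0 by auto
  qed
  have Qincr: "xs!a < xs!b'" if "b0 \<le> a" "a < b'" "b' < n" for a b'
    using small_inc[of a b'] QQ[of a] QQ[of b'] that hb0 m_def by auto
  have PP: "xs!i < xs!j" if "1 < i" "i < a0" "i < j" "j < n" for i j
    using Fpre[of i j] that r1 by auto
  have PPm: "xs!i < m" if "1 < i" "i < a0" for i
    using PP[of i b0] that hb0 b0m by auto
  have ne1: "xs!i > 1" if "i < n" "i \<noteq> 1" for i
    using inj[of i 1] rng[of i] that p1' n3 by (cases "xs!i = 1") auto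
  have m0: "xs!i \<noteq> m" if "i < n" "i \<noteq> 0" for i
    using inj[of i 0] that m_def by auto
  have vP: "xs!i = i" if "1 < i" "i < a0" for i
  proof -
    have "xs!i = card {1..<i} + 1"
    proof (rule rank_card)
      show "i < n" using that a0n by simp
      show "{1..<i} \<subseteq> {..<n}" using that a0n by auto
      fix j assume "j < n"
      show "xs!j < xs!i \<longleftrightarrow> j \<in> {1..<i}"
      proof (cases "j = 0")
        case True then show ?thesis using PPm[of i] that m_def by auto
      next
        case j0: False
        show ?thesis
        proof (cases "j = 1")
          case True then show ?thesis using ne1[of i] that a0n p1' by auto
        next
          case j1: False
          show ?thesis
          proof (cases "j < i")
            case True then show ?thesis using PP[of j i] j0 j1 that a0n by auto
          next
            case False
            then have "xs!i \<le> xs!j" using PP[of i j] that \<open>j<n\<close> by (cases "j = i") auto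
            then show ?thesis using False by auto
          qed
        qed
      qed
    qed
    then show ?thesis using that by simp
  qed
  have vL: "xs!i = i + (n - b0) + 1" if "a0 \<le> i" "i < b0" for i
  proof -
    have "xs!i = card ({0..<i} \<union> {b0..<n}) + 1"
    proof (rule rank_card)
      show "i < n" using that hb0 by simp
      show "{0..<i} \<union> {b0..<n} \<subseteq> {..<n}" using that hb0 by auto
      fix j assume "j < n"
      show "xs!j < xs!i \<longleftrightarrow> j \<in> {0..<i} \<union> {b0..<n}"
      proof (cases "j = 0")
        case True then show ?thesis using LL[of i] that m_def a02 by auto
      next
        case j0: False
        show ?thesis
        proof (cases "j = 1")
          case True then show ?thesis using LL[of i] that a02 p1' m_def isB by auto
        next
          case j1: False
          show ?thesis
          proof (cases "j < a0")
            case True then show ?thesis using PP[of j i] j0 j1 that hb0 by auto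
          next
            case ja: False
            show ?thesis
            proof (cases "j < b0")
              case True
              show ?thesis
              proof (cases "j < i")
                case True then show ?thesis using Lincr[of j i] ja that by auto
              next
                case False
                then have "xs!i \<le> xs!j" using Lincr[of i j] that \<open>j<b0\<close> by (cases "j = i") auto
                then show ?thesis using False \<open>j<b0\<close> by auto
              qed
            next
              case False
              then show ?thesis using QQ[of j] LL[of i] that \<open>j<n\<close> by auto
            qed
          qed
        qed
      qed
    qed
    moreover have "card ({0..<i} \<union> {b0..<n}) = i + (n - b0)"
      using that by (subst card_Un_disjoint) auto
    ultimately show ?thesis by simp
  qed
  have vQ: "xs!i = (a0 - 1) + (i - b0) + 1" if "b0 \<le> i" "i < n" for i
  proof -
    have "xs!i = card ({1..<a0} \<union> {b0..<i}) + 1"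
    proof (rule rank_card)
      show "i < n" using that by simp
      show "{1..<a0} \<union> {b0..<i} \<subseteq> {..<n}" using that hb0 by auto
      fix j assume "j < n"
      show "xs!j < xs!i \<longleftrightarrow> j \<in> {1..<a0} \<union> {b0..<i}"
      proof (cases "j = 0")
        case True then show ?thesis using QQ[of i] that m_def hb0 by auto
      next
        case j0: False
        show ?thesis
        proof (cases "j = 1")
          case True then show ?thesis using ne1[of i] that a02 hb0 p1' by auto
        next
          case j1: False
          show ?thesis
          proof (cases "j < a0")
            case True then show ?thesis using PP[of j i] j0 j1 that hb0 by auto
          next
            case ja: False
            show ?thesis
            proof (cases "j < b0")
              case True
              then show ?thesis using QQ[of i] LL[of j] that ja by auto
            next
              case jb: False
              show ?thesis
              proof (cases "j < i")
                case True then show ?thesis using Qincr[of j i] jb that by auto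
              next
                case False
                then have "xs!i \<le> xs!j" using Qincr[of i j] that \<open>j<n\<close> by (cases "j = i") auto
                then show ?thesis using False ja jb by auto
              qed
            qed
          qed
        qed
      qed
    qed
    moreover have "card ({1..<a0} \<union> {b0..<i}) = (a0 - 1) + (i - b0)"
      using that hb0 by (subst card_Un_disjoint) auto
    ultimately show ?thesis by simp
  qed
  have mval: "m = a0 + (n - b0)" using vL[of a0] pa0 hb0 by simp
  show ?thesis
  proof (cases "m + 2 \<le> n")
    case True
    have "xs \<in> FB n"
    proof (rule FB_I[of m "a0 - 1"])
      show "(m, a0 - 1) \<in> PB n" using True mval a02 hb0 by (auto simp: PB_def)
      show "xs = map (gB m (a0 - 1) n) [0..<n]"
      proof (rule eq_map)
        fix i assume "i < n"
        consider "i = 0" | "i = 1" | "1 < i \<and> i < a0" | "a0 \<le> i \<and> i < b0" | "b0 \<le> i" by linarith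
        then show "xs!i = gB m (a0 - 1) n i"
        proof cases
          case 1 then show ?thesis using m_def by (simp add: gB_def)
        next
          case 2 then show ?thesis using p1' a02 by (simp add: gB_def)
        next
          case 3 then show ?thesis using vP[of i] by (auto simp add: gB_def)
        next
          case 4 then show ?thesis using vL[of i] mval hb0 a02 by (auto simp add: gB_def)
        next
          case 5 then show ?thesis using vQ[of i] \<open>i<n\<close> mval hb0 a02 by (auto simp add: gB_def)
        qed
      qed
    qed
    then show ?thesis by simp
  next
    case False
    then have mn1: "m = n - 1" "b0 = a0 + 1" using mval hb0 by auto
    have "xs \<in> FA n"
    proof (rule FA_I[of m a0])
      show "(m, a0) \<in> PA n" using mn1 a02 a0n isB m_def by (auto simp: PA_def)
      show "xs = map (gA m a0 n) [0..<n]"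
      proof (rule eq_map)
        fix i assume "i < n"
        consider "i = 0" | "i = 1" | "1 < i \<and> i < a0" | "i = a0" | "b0 \<le> i" using mn1 by linarith
        then show "xs!i = gA m a0 n i"
        proof cases
          case 1 then show ?thesis using m_def a02 by (simp add: gA_def bA_def)
        next
          case 2 then show ?thesis using p1' a02 isB m_def by (simp add: gA_def bA_def)
        next
          case 3 then show ?thesis using vP[of i] mn1 a0n by (auto simp add: gA_def bA_def)
        next
          case 4 then show ?thesis using pa0 mn1 n3 by (simp add: gA_def)
        next
          case 5 then show ?thesis using vQ[of i] \<open>i<n\<close> mn1 hb0 a02 by (auto simp add: gA_def bA_def)
        qed
      qed
    qed
    then show ?thesis by simp
  qed
qed

lemma P2: "xs \<in> FA n \<union> FB n"
proof -
  define r where "r = (if xs!0 = 1 then 0 else (1::nat))"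
  show ?thesis
  proof (cases "\<exists>a b. r<a \<and> a<b \<and> b<n \<and> xs!b < xs!a")
    case False
    have NI: "\<forall>a b. r<a \<and> a<b \<and> b<n \<longrightarrow> xs!a < xs!b"
    proof (intro allI impI)
      fix a b assume h: "r<a \<and> a<b \<and> b<n"
      then have "\<not> xs!b < xs!a" using False by blast
      moreover have "xs!a \<noteq> xs!b" using inj[of a b] h by auto
      ultimately show "xs!a < xs!b" by simp
    qed
    show ?thesis using noinv[OF r_def NI] by simp
  next
    case True
    define Q where "Q = (\<lambda>a. r<a \<and> a<n \<and> (\<exists>b. a<b \<and> b<n \<and> xs!b < xs!a))"
    from True obtain a1 b1 where "r<a1" "a1<b1" "b1<n" "xs!b1 < xs!a1" by blast
    then have "Q a1" unfolding Q_def by auto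
    define a0 where "a0 = (LEAST a. Q a)"
    have "Q a0" using LeastI[of Q a1] \<open>Q a1\<close> a0_def by simp
    then obtain b where a0: "r < a0" "a0 < b" "b < n" "xs!b < xs!a0" unfolding Q_def by auto
    have Fpre: "xs!i < xs!j" if "r<i" "i<a0" "i<j" "j<n" for i j
    proof -
      have "\<not> Q i" using not_less_Least[of i Q] that a0_def by simp
      then have "\<not> xs!j < xs!i" using that a0 unfolding Q_def by auto
      moreover have "xs!i \<noteq> xs!j" using inj[of i j] that by auto
      ultimately show ?thesis by simp
    qed
    show ?thesis
    proof (cases "xs!a0 = xs!0 + 1 \<and> xs!0 \<ge> 2")
      case True
      then show ?thesis using caseB[OF r_def a0 Fpre] by blast
    next
      case False
      then show ?thesis using caseA[OF r_def a0 Fpre] by blast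
    qed
  qed
qed

end

lemma Fish_eq: assumes "n \<ge> 3" shows "Fish n [[3,2,1],[1,3,2,4]] = FA n \<union> FB n"
proof
  show "Fish n [[3,2,1],[1,3,2,4]] \<subseteq> FA n \<union> FB n"
  proof
    fix xs assume "xs \<in> Fish n [[3,2,1],[1,3,2,4]]"
    then interpret VP xs n using assms by unfold_locales
    show "xs \<in> FA n \<union> FB n" by (rule P2)
  qed
  show "FA n \<union> FB n \<subseteq> Fish n [[3,2,1],[1,3,2,4]]"
    using A_valid B_valid unfolding FA_def FB_def by auto
qed

lemma inj_A: "inj_on (\<lambda>(m,k). map (gA m k n) [0..<n]) (PA n)"
proof (rule inj_onI, clarify)
  fix m k m' k' assume h: "(m,k) \<in> PA n" "(m',k') \<in> PA n" "map (gA m k n) [0..<n] = map (gA m' k' n) [0..<n]"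
  have e: "gA m k n i = gA m' k' n i" if "i < n" for i
    using arg_cong[OF h(3), of "\<lambda>xs. xs!i"] that by simp
  have kn: "k < n" using h(1) by (auto simp: PA_def)
  have "gA m' k' n k = n" using e[OF kn] by (simp add: gA_def)
  then have kk: "k = k'" using h(1,2) kn unfolding gA_def bA_def PA_def by (auto split: if_splits)
  show "m = m' \<and> k = k'"
  proof (cases "k = 0")
    case True then show ?thesis using h(1,2) kk by (auto simp: PA_def)
  next
    case False
    then have "gA m k n 0 = gA m' k' n 0" using e[of 0] kn by simp
    then show ?thesis using False kk by (simp add: gA_def bA_def)
  qed
qed

lemma inj_B: "inj_on (\<lambda>(m,j). map (gB m j n) [0..<n]) (PB n)"
proof (rule inj_onI, clarify)
  fix m j m' j' assume h: "(m,j) \<in> PB n" "(m',j') \<in> PB n" "map (gB m j n) [0..<n] = map (gB m' j' n) [0..<n]"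
  have e: "gB m j n i = gB m' j' n i" if "i < n" for i
    using arg_cong[OF h(3), of "\<lambda>xs. xs!i"] that by simp
  have mm: "m = m'" using e[of 0] h(1) by (auto simp: PB_def gB_def)
  have "j \<le> j'"
  proof (rule ccontr)
    assume "\<not> j \<le> j'"
    then have "gB m j n (j'+1) = gB m' j' n (j'+1)" using e[of "j'+1"] h(1) by (auto simp: PB_def)
    then show False using h(1,2) mm \<open>\<not> j \<le> j'\<close> unfolding gB_def PB_def by (auto split: if_splits)
  qed
  moreover have "j' \<le> j"
  proof (rule ccontr)
    assume "\<not> j' \<le> j"
    then have "gB m j n (j+1) = gB m' j' n (j+1)" using e[of "j+1"] h(2) mm by (auto simp: PB_def)
    then show False using h(1,2) mm \<open>\<not> j' \<le> j\<close> unfolding gB_def PB_def by (auto split: if_splits)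
  qed
  ultimately show "m = m' \<and> j = j'" using mm by simp
qed

lemma disj_AB: assumes "n \<ge> 3" shows "FA n \<inter> FB n = {}"
proof -
  have ne: "gA m k n (n-1) \<noteq> gB m' j n (n-1)" if "(m,k) \<in> PA n" "(m',j) \<in> PB n" for m k m' j
    using that assms unfolding gA_def bA_def gB_def PA_def PB_def by (auto split: if_splits)
  have ne2: "map (gA m k n) [0..<n] \<noteq> map (gB m' j n) [0..<n]" if "(m,k) \<in> PA n" "(m',j) \<in> PB n" for m k m' j
  proof
    assume eq: "map (gA m k n) [0..<n] = map (gB m' j n) [0..<n]"
    have "n - 1 < n" using assms by simp
    then have "map (gA m k n) [0..<n] ! (n-1) = gA m k n (n-1)" "map (gB m' j n) [0..<n] ! (n-1) = gB m' j n (n-1)"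
      by simp_all
    then show False using eq ne[OF that] by simp
  qed
  show ?thesis unfolding FA_def FB_def using ne2 by fastforce
qed

lemma card_PA: assumes "n \<ge> 2" shows "card (PA n) = n + (n-2)*(n-2)"
proof -
  have "PA n = ({1} \<times> {..<n}) \<union> ({2..<n} \<times> {2..<n})" by (auto simp: PA_def)
  moreover have "card (({1} \<times> {..<n}) \<union> ({2..<n} \<times> {2..<n})) = n + (n-2)*(n-2)"
    by (subst card_Un_disjoint) (auto simp: card_cartesian_product)
  ultimately show ?thesis by simp
qed

lemma sum_m2: "2 * (\<Sum>m\<in>{3..<N}. m - 2) = (N-3)*(N-2 :: nat)"
proof (induction N)
  case 0 then show ?case by simp
next
  case (Suc N)
  show ?case
  proof (cases "N \<ge> 3")
    case True
    then have "{3..<Suc N} = insert N {3..<N}" by auto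
    then have "(\<Sum>m\<in>{3..<Suc N}. m - 2) = (N - 2) + (\<Sum>m\<in>{3..<N}. m - 2)" by simp
    then show ?thesis using Suc True by (simp add: algebra_simps; cases N; simp; cases "N - 3"; simp add: algebra_simps)
  next
    case False
    then show ?thesis by (auto simp: not_le less_Suc_eq)
  qed
qed

lemma card_PB: "2 * card (PB n) = (n-4)*(n-3)"
proof -
  have "PB n = (SIGMA m:{3..<n-1}. {1..<m-1})" by (auto simp: PB_def)
  then have "card (PB n) = (\<Sum>m\<in>{3..<n-1}. m - 2)" by (simp add: numeral_2_eq_2)
  then have "2 * card (PB n) = (n-1-3)*(n-1-2)" by (simp only: sum_m2)
  moreover have "n - 1 - 3 = n - 4" "n - 1 - 2 = n - 3" by arith+
  ultimately show ?thesis by simp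
qed

theorem mainTheorem8:
  fixes n :: nat
  assumes "n \<ge> 3"
  shows "real (card (Fish n [[3,2,1],[1,3,2,4]])) = 3/2 * real n ^ 2 - 13/2 * real n + 10"
proof -
  have fin: "finite (FA n)" "finite (FB n)"
  proof -
    have "finite (PA n)" by (rule finite_subset[of _ "{..n} \<times> {..<n}"]) (auto simp: PA_def)
    then show "finite (FA n)" unfolding FA_def by simp
    have "finite (PB n)" by (rule finite_subset[of _ "{..n} \<times> {..n}"]) (auto simp: PB_def)
    then show "finite (FB n)" unfolding FB_def by simp
  qed
  have "card (Fish n [[3,2,1],[1,3,2,4]]) = card (FA n) + card (FB n)"
    using Fish_eq[OF assms] disj_AB[OF assms] fin by (simp add: card_Un_disjoint)
  moreover have "card (FA n) = n + (n-2)*(n-2)"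
    using card_image[OF inj_A[of n]] card_PA[of n] assms unfolding FA_def by simp
  moreover have "2 * card (FB n) = (n-4)*(n-3)"
    using card_image[OF inj_B[of n]] card_PB[of n] unfolding FB_def by simp
  ultimately have c: "2 * card (Fish n [[3,2,1],[1,3,2,4]]) = 2*n + 2*(n-2)*(n-2) + (n-4)*(n-3)"
    by simp
  obtain k where k: "n = k + 3" using assms by (metis add.commute le_iff_add)
  have "real (2 * card (Fish n [[3,2,1],[1,3,2,4]])) = 2 * real n + 2 * (real n - 2) * (real n - 2) + (real n - 4) * (real n - 3)"
  proof (cases k)
    case 0 then show ?thesis using c k by simp
  next
    case (Suc k')
    then have "n \<ge> 4" using k by simp
    then show ?thesis unfolding c by (simp add: of_nat_diff)
  qed
  then show ?thesis by (simp add: power2_eq_square algebra_simps)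
qed


end
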